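(* Suppose both constraints are violated at the unconstrained Nash equilibrium, i.e., $B_{i,S}^{\text{NE}}<B_{i,S}^0$ for $i=1,2$. Then the Nash equilibrium with the regulatory constraints is of one of the following types: Type I. Both SPs increase their small-cell bandwidth allocations to exactly the required amount, i.e., $B_{1,S}=B_{1,S}^0$, $B_{2,S}=B_{2,S}^0$. Type II. One SP increases its small-cell bandwidth exactly to the required amount, while the other SP increases it further beyond the required amount, i.e., $B_{1,S}=B_{1,S}^0, B_{2,S}>B_{2,S}^0$ or $B_{1,S}>B_{1,S}^0, B_{2,S}=B_{2,S}^0$.
   Context: Two competing service providers (SPs), $i=1,2$, each have total licensed bandwidth $B_i$, split into macro-cell bandwidth $B_{i,M}$ and small-cell bandwidth $B_{i,S}$ with $B_{i,M}+B_{i,S}\le B_i$, $B_{i,M}\ge 0$, and regulatory constraint $B_{i,S}\ge B_{i,S}^0$. Macro-cells of SP $i$ provide rate $B_{i,M}R_0$, small-cells provide rate $\lambda_S B_{i,S}R_0$ with $\lambda_S>1$. Mobile users (density $N_m$) can only use macro-cells (with priority); fixed users (density $N_f$) can use macro- or small-cells of either SP. All users have utility $u(r)=r^{1-\alpha}/(1-\alpha)$, $\alpha\in(0,1)$, with demand $D(p)=(1/p)^{1/\alpha}$ at price $p$ per unit rate; users choose the lowest-priced service and fill its capacity. Each SP maximizes its revenue $p_{i,M}K_{i,M}D(p_{i,M})+p_{i,S}K_{i,S}D(p_{i,S})$ in a two-stage game: bandwidth splits first, then prices; the price equilibrium for any fixed bandwidth allocation is the market-clearing price. Without the regulatory constraints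 there is a unique Nash equilibrium with $B_{i,S}^{\text{NE}}=\frac{N_f\lambda_S^{1/\alpha-1}B_i}{N_f\lambda_S^{1/\alpha-1}+N_m}$, $B_{i,M}^{\text{NE}}=\frac{N_mB_i}{N_f\lambda_S^{1/\alpha-1}+N_m}$; with the constraints a Nash equilibrium exists and is unique. *)

theory Defs
  imports Complex_Main
begin

text \<open>Demand of a user with utility r^(1-alpha)/(1-alpha) at unit price p.\<close>
definition demand :: "real \<Rightarrow> real \<Rightarrow> real" where
  "demand alpha p = (1 / p) powr (1 / alpha)"

definition cap_M :: "real \<Rightarrow> real \<Rightarrow> real \<Rightarrow> real" where
  "cap_M R0 bM1 bM2 = R0 * (bM1 + bM2)"

definition cap_S :: "real \<Rightarrow> real \<Rightarrow> real \<Rightarrow> real \<Rightarrow> real" where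
  "cap_S lam R0 bS1 bS2 = lam * R0 * (bS1 + bS2)"

text \<open>Mobile users (density Nm) can only use
 macro cells (with priority); fixed users (density Nf) use the cheapest service.
 If Nm / C_M \<ge> Nf / C_S (written multiplied out) the two markets clear separately:
 Nm * D(p_M) = C_M and Nf * D(p_S) = C_S. Otherwise fixed users spill over to the
 macro cells and a single price clears the whole market:
 (Nm + Nf) * D(p) = C_M + C_S.  Since D(p) = p^(-1/alpha), p = (N/C)^alpha.\<close>
definition price_M :: "real \<Rightarrow> real \<Rightarrow> real \<Rightarrow> real \<Rightarrow> real \<Rightarrow> real \<Rightarrow> real \<Rightarrow> real \<Rightarrow> real \<Rightarrow> real" where
  "price_M alpha Nm Nf lam R0 bM1 bS1 bM2 bS2 =
     (let CM = cap_M R0 bM1 bM2; CS = cap_S lam R0 bS1 bS2 in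
      if Nm * CS \<ge> Nf * CM then (Nm / CM) powr alpha
      else ((Nm + Nf) / (CM + CS)) powr alpha)"

definition price_S :: "real \<Rightarrow> real \<Rightarrow> real \<Rightarrow> real \<Rightarrow> real \<Rightarrow> real \<Rightarrow> real \<Rightarrow> real \<Rightarrow> real \<Rightarrow> real" where
  "price_S alpha Nm Nf lam R0 bM1 bS1 bM2 bS2 =
     (let CM = cap_M R0 bM1 bM2; CS = cap_S lam R0 bS1 bS2 in
      if Nm * CS \<ge> Nf * CM then (Nf / CS) powr alpha
      else ((Nm + Nf) / (CM + CS)) powr alpha)"

definition revenue :: "real \<Rightarrow> real \<Rightarrow> real \<Rightarrow> real \<Rightarrow> real \<Rightarrow> real \<Rightarrow> real \<Rightarrow> real \<Rightarrow> real \<Rightarrow> real" where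
  "revenue alpha Nm Nf lam R0 bM bS cM cS =
     price_M alpha Nm Nf lam R0 bM bS cM cS * (R0 * bM)
   + price_S alpha Nm Nf lam R0 bM bS cM cS * (lam * R0 * bS)"

definition feasible :: "real \<Rightarrow> real \<Rightarrow> real \<Rightarrow> real \<Rightarrow> bool" where
  "feasible B BS0 bM bS \<longleftrightarrow> bM \<ge> 0 \<and> bS \<ge> BS0 \<and> bM + bS \<le> B"

definition is_constrained_NE ::
  "real \<Rightarrow> real \<Rightarrow> real \<Rightarrow> real \<Rightarrow> real \<Rightarrow> real \<Rightarrow> real \<Rightarrow> real \<Rightarrow> real
   \<Rightarrow> real \<Rightarrow> real \<Rightarrow> real \<Rightarrow> real \<Rightarrow> bool" where
  "is_constrained_NE alpha Nm Nf lam R0 B1 B2 BS01 BS02 b1M b1S b2M b2S \<longleftrightarrow>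
     feasible B1 BS01 b1M b1S \<and> feasible B2 BS02 b2M b2S \<and>
     (\<forall>x y. feasible B1 BS01 x y \<longrightarrow>
        revenue alpha Nm Nf lam R0 x y b2M b2S \<le> revenue alpha Nm Nf lam R0 b1M b1S b2M b2S) \<and>
     (\<forall>x y. feasible B2 BS02 x y \<longrightarrow>
        revenue alpha Nm Nf lam R0 x y b1M b1S \<le> revenue alpha Nm Nf lam R0 b2M b2S b1M b1S)"

definition BS_NE :: "real \<Rightarrow> real \<Rightarrow> real \<Rightarrow> real \<Rightarrow> real \<Rightarrow> real" where
  "BS_NE alpha Nm Nf lam B =
     Nf * lam powr (1 / alpha - 1) * B / (Nf * lam powr (1 / alpha - 1) + Nm)"

end

theory Submission imports Defs begin

lemma term_eq:
  fixes N R x X al :: real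
  assumes "X > 0" "R > 0"
  shows "(N / (R * X)) powr al * (R * x) = N powr al * R powr (1 - al) * x * X powr (- al)"
proof -
  have e: "(N / (R * X)) powr al = N powr al * (R powr (- al) * X powr (- al))"
    by (simp add: powr_divide powr_mult powr_minus_divide)
  have r: "R powr (- al) * R = R powr (1 - al)"
    using assms by (simp add: powr_diff powr_minus_divide)
  have "(N / (R * X)) powr al * (R * x) = N powr al * (R powr (- al) * R) * x * X powr (- al)"
    unfolding e by (simp only: mult_ac)
  also have "\<dots> = N powr al * R powr (1 - al) * x * X powr (- al)" unfolding r ..
  finally show ?thesis .
qed

lemma rev_eq:
  fixes alpha Nm Nf lam R0 x y m' s' :: real
  assumes "R0 > 0" "lam > 0"
    and "x = 0 \<or> x + m' > 0" "y + s' > 0"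
    and "Nm * (lam * R0 * (y + s')) \<ge> Nf * (R0 * (x + m'))"
  shows "revenue alpha Nm Nf lam R0 x y m' s' =
     Nm powr alpha * R0 powr (1 - alpha) * x * (x + m') powr (- alpha)
   + Nf powr alpha * (lam * R0) powr (1 - alpha) * y * (y + s') powr (- alpha)"
proof -
  have A: "(Nm / (R0 * (x + m'))) powr alpha * (R0 * x) = Nm powr alpha * R0 powr (1 - alpha) * x * (x + m') powr (- alpha)"
    using assms(3) term_eq[of "x + m'" R0 Nm alpha x] assms(1) by auto
  have B: "(Nf / (lam * R0 * (y + s'))) powr alpha * (lam * R0 * y) = Nf powr alpha * (lam * R0) powr (1 - alpha) * y * (y + s') powr (- alpha)"
    using term_eq[of "y + s'" "lam * R0" Nf alpha y] assms by auto
  have "revenue alpha Nm Nf lam R0 x y m' s' = (Nm / (R0 * (x + m'))) powr alpha * (R0 * x) + (Nf / (lam * R0 * (y + s'))) powr alpha * (lam * R0 * y)"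
    unfolding revenue_def price_M_def price_S_def cap_M_def cap_S_def Let_def
    using assms(5) by (simp add: distrib_left)
  then show ?thesis using A B by simp
qed


lemma phi_deriv:
  fixes a c m M s S al :: real
  assumes "M > 0" "S > 0"
  shows "((\<lambda>t. a*(m+t)*(M+t) powr (-al) + c*(s-t)*(S-t) powr (-al)) has_real_derivative
     (a*(M powr (-al) - al*m*M powr(-al-1)) - c*(S powr (-al) - al*s*S powr(-al-1)))) (at 0)"
  using assms
  by (auto intro!: derivative_eq_intros simp: algebra_simps)


lemma dev_interior:
  fixes alpha Nm Nf lam R0 B BSz m s m' s' :: real
  assumes pos: "R0 > 0" "lam > 0" "Nm > 0" "Nf > 0"
    and ne: "\<forall>x y. feasible B BSz x y \<longrightarrow>
        revenue alpha Nm Nf lam R0 x y m' s' \<le> revenue alpha Nm Nf lam R0 m s m' s'"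
    and fe: "feasible B BSz m s" and sb: "s > BSz" "BSz \<ge> 0" and "s' \<ge> 0"
    and Mp: "m + m' > 0"
    and reg: "Nm * lam * (s + s') > Nf * (m + m')"
  shows "Nm powr alpha * R0 powr (1 - alpha) * ((m+m') powr (-alpha) - alpha*m*(m+m') powr(-alpha-1))
      \<le> Nf powr alpha * (lam * R0) powr (1 - alpha) * ((s+s') powr (-alpha) - alpha*s*(s+s') powr(-alpha-1))"
    (is "?a * ?gm \<le> ?c * ?gs")
proof (rule ccontr)
  assume "\<not> ?thesis"
  hence D: "?a * ?gm - ?c * ?gs > 0" by simp
  define \<phi> where "\<phi> = (\<lambda>t. ?a*(m+t)*((m+m')+t) powr (-alpha) + ?c*(s-t)*((s+s')-t) powr (-alpha))"
  have Sp: "s + s' > 0" using sb \<open>s' \<ge> 0\<close> by simp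
  have der: "(\<phi> has_real_derivative (?a * ?gm - ?c * ?gs)) (at 0)"
    unfolding \<phi>_def using phi_deriv[OF Mp Sp, where a="?a" and c="?c" and m=m and s=s and al=alpha] by (simp add: algebra_simps)
  obtain d where d: "d > 0" "\<forall>h>0. h < d \<longrightarrow> \<phi> 0 < \<phi> (0 + h)"
    using DERIV_pos_inc_right[OF der D] by blast
  define \<delta> where "\<delta> = (Nm * lam * (s + s') - Nf * (m + m')) / (Nm * lam + Nf)"
  have \<delta>p: "\<delta> > 0" unfolding \<delta>_def using reg pos by (intro divide_pos_pos) (auto simp: add_pos_pos)
  define h where "h = min d (min (s - BSz) \<delta>) / 2"
  have hp: "h > 0" "h < d" "h < s - BSz" "h < \<delta>" unfolding h_def using d \<delta>p sb by auto
  have dp: "Nm * lam + Nf > 0" using pos by (simp add: add_pos_pos)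
  have "h * (Nm * lam + Nf) < Nm * lam * (s + s') - Nf * (m + m')"
    using hp(4) dp unfolding \<delta>_def by (simp add: pos_less_divide_eq)
  hence r0: "Nf * (m + h + m') \<le> Nm * lam * (s - h + s')" by (simp add: algebra_simps)
  have reg2: "Nf * (R0 * (m + h + m')) \<le> Nm * (lam * R0 * (s - h + s'))"
    using mult_left_mono[OF r0, of R0] pos by (simp add: algebra_simps)
  have reg1: "Nf * (R0 * (m + m')) \<le> Nm * (lam * R0 * (s + s'))"
    using mult_left_mono[OF less_imp_le[OF reg], of R0] pos by (simp add: algebra_simps)
  have e1: "revenue alpha Nm Nf lam R0 (m + h) (s - h) m' s' = \<phi> h"
    unfolding \<phi>_def using rev_eq[OF pos(1,2), where x="m+h" and m'=m' and y="s-h" and s'=s' and alpha=alpha and Nm=Nm and Nf=Nf] reg2 Mp hp sb \<open>s' \<ge> 0\<close>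
    by (simp add: algebra_simps)
  have e0: "revenue alpha Nm Nf lam R0 m s m' s' = \<phi> 0"
    unfolding \<phi>_def using rev_eq[OF pos(1,2), where x=m and m'=m' and y=s and s'=s' and alpha=alpha and Nm=Nm and Nf=Nf] reg1 Mp Sp
    by (simp add: algebra_simps)
  have "feasible B BSz (m + h) (s - h)" using fe hp unfolding feasible_def by auto
  hence "\<phi> h \<le> \<phi> 0" using ne e0 e1 by metis
  moreover have "\<phi> 0 < \<phi> h" using d hp by simp
  ultimately show False by simp
qed


lemma dev_zero:
  fixes alpha Nm Nf lam R0 B BSz s s' :: real
  assumes pos: "R0 > 0" "lam > 0" "Nm > 0" "Nf > 0" "alpha > 0"
    and ne: "\<forall>x y. feasible B BSz x y \<longrightarrow>
        revenue alpha Nm Nf lam R0 x y 0 s' \<le> revenue alpha Nm Nf lam R0 0 s 0 s'"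
    and fe: "feasible B BSz 0 s" and sb: "s > BSz" "BSz \<ge> 0" and "s' \<ge> 0"
  shows False
proof -
  define a where "a = Nm powr alpha * R0 powr (1 - alpha)"
  define c where "c = Nf powr alpha * (lam * R0) powr (1 - alpha)"
  define S where "S = s + s'"
  have ap: "a > 0" unfolding a_def using pos by simp
  have cp: "c > 0" unfolding c_def using pos by simp
  have Sp: "S > 0" unfolding S_def using sb \<open>s' \<ge> 0\<close> by simp
  define \<delta> where "\<delta> = Nm * lam * S / (Nm * lam + Nf)"
  have dp: "Nm * lam + Nf > 0" using pos by (simp add: add_pos_pos)
  have \<delta>p: "\<delta> > 0" unfolding \<delta>_def using dp pos Sp by simp
  define \<tau> where "\<tau> = (a * S powr alpha / c) powr (1 / alpha)"
  have \<tau>p: "\<tau> > 0" unfolding \<tau>_def using ap cp Sp by simp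
  define t where "t = min (s - BSz) (min \<delta> \<tau>) / 2"
  have tp: "t > 0" "t < s - BSz" "t < \<delta>" "t < \<tau>" unfolding t_def using \<delta>p \<tau>p sb by auto
  have "t * (Nm * lam + Nf) < Nm * lam * S"
    using tp(3) dp unfolding \<delta>_def by (simp add: pos_less_divide_eq)
  hence r0: "Nf * t \<le> Nm * lam * (S - t)" by (simp add: algebra_simps)
  have reg2: "Nf * (R0 * (t + 0)) \<le> Nm * (lam * R0 * (s - t + s'))"
    using mult_left_mono[OF r0, of R0] pos unfolding S_def by (simp add: algebra_simps)
  have reg1: "Nf * (R0 * (0 + 0)) \<le> Nm * (lam * R0 * (s + s'))"
    using Sp pos unfolding S_def by simp
  have e1: "revenue alpha Nm Nf lam R0 t (s - t) 0 s' = a * t * t powr (- alpha) + c * (s - t) * (S - t) powr (- alpha)"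
    using rev_eq[OF pos(1,2), where x=t and m'=0 and y="s-t" and s'=s' and alpha=alpha and Nm=Nm and Nf=Nf] reg2 tp sb \<open>s' \<ge> 0\<close>
    unfolding a_def c_def S_def by (simp add: algebra_simps)
  have e0: "revenue alpha Nm Nf lam R0 0 s 0 s' = c * s * S powr (- alpha)"
    using rev_eq[OF pos(1,2), where x=0 and m'=0 and y=s and s'=s' and alpha=alpha and Nm=Nm and Nf=Nf] reg1 Sp
    unfolding a_def c_def S_def by simp
  have "feasible B BSz t (s - t)" using fe tp unfolding feasible_def by auto
  hence le: "a * t * t powr (- alpha) + c * (s - t) * (S - t) powr (- alpha) \<le> c * s * S powr (- alpha)"
    using ne e0 e1 by metis
  have m1: "S powr (- alpha) \<le> (S - t) powr (- alpha)"
    using powr_mono2'[of "- alpha" "S - t" S] pos tp sb Sp \<open>s' \<ge> 0\<close> unfolding S_def by simp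
  have st: "s - t \<ge> 0" using tp sb by simp
  have "c * (s - t) * S powr (- alpha) \<le> c * (s - t) * (S - t) powr (- alpha)"
    using mult_left_mono[OF m1, of "c * (s - t)"] cp st by simp
  with le have k: "a * t * t powr (- alpha) \<le> c * t * S powr (- alpha)" by (simp add: algebra_simps)
  have "t powr alpha < \<tau> powr alpha" using powr_less_mono2[OF pos(5) _ tp(4)] tp by simp
  also have "\<tau> powr alpha = a * S powr alpha / c" unfolding \<tau>_def using pos ap cp by (simp add: powr_powr)
  finally have "c * t powr alpha < a * S powr alpha" using cp by (simp add: field_simps)
  moreover have "t powr (- alpha) = 1 / t powr alpha" "S powr (- alpha) = 1 / S powr alpha"
    by (simp_all add: powr_minus_divide)
  moreover have "t powr alpha > 0" "S powr alpha > 0" using tp Sp by auto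
  moreover have "\<And>u v. u > 0 \<Longrightarrow> v > 0 \<Longrightarrow> c * u < a * v \<Longrightarrow> c * (1 / v) < a * (1 / u)"
    by (simp add: field_simps)
  ultimately have "c * S powr (- alpha) < a * t powr (- alpha)" by simp
  hence "a * t * t powr (- alpha) > c * t * S powr (- alpha)"
    using tp mult_strict_left_mono[of "c * S powr (- alpha)" "a * t powr (- alpha)" t] by (simp add: mult_ac)
  with k show False by simp
qed


lemma share_bound:
  fixes K Nm B BSz bM bS :: real
  assumes "K > 0" "Nm > 0" "K * B / (K + Nm) < BSz" "BSz \<le> bS" "bM + bS \<le> B"
  shows "K * bM < Nm * bS"
proof -
  have "K * B < BSz * (K + Nm)" using assms(1-3) by (simp add: pos_divide_less_eq)
  also have "\<dots> \<le> bS * (K + Nm)" using assms by (intro mult_right_mono) auto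
  finally have "K * B < bS * (K + Nm)" .
  moreover have "K * (bM + bS) \<le> K * B" using assms by (intro mult_left_mono) auto
  ultimately show ?thesis by (simp add: algebra_simps)
qed

theorem proposition1:
  fixes alpha Nm Nf lam R0 B1 B2 BS01 BS02 b1M b1S b2M b2S :: real
  assumes "0 < alpha" "alpha < 1"
    and "Nm > 0" "Nf > 0" "lam > 1" "R0 > 0"
    and "B1 > 0" "B2 > 0"
    and "BS01 \<ge> 0" "BS02 \<ge> 0"
    and "BS_NE alpha Nm Nf lam B1 < BS01"
    and "BS_NE alpha Nm Nf lam B2 < BS02"
    and "is_constrained_NE alpha Nm Nf lam R0 B1 B2 BS01 BS02 b1M b1S b2M b2S"
  shows "(b1S = BS01 \<and> b2S = BS02)
       \<or> (b1S = BS01 \<and> b2S > BS02)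
       \<or> (b1S > BS01 \<and> b2S = BS02)"
proof (rule ccontr)
  assume nc: "\<not> ?thesis"
  note NE = assms(13)[unfolded is_constrained_NE_def]
  have f1: "feasible B1 BS01 b1M b1S" and f2: "feasible B2 BS02 b2M b2S"
    and ne1: "\<forall>x y. feasible B1 BS01 x y \<longrightarrow>
        revenue alpha Nm Nf lam R0 x y b2M b2S \<le> revenue alpha Nm Nf lam R0 b1M b1S b2M b2S"
    and ne2: "\<forall>x y. feasible B2 BS02 x y \<longrightarrow>
        revenue alpha Nm Nf lam R0 x y b1M b1S \<le> revenue alpha Nm Nf lam R0 b2M b2S b1M b1S"
    using NE by auto
  have s1: "b1S > BS01" and s2: "b2S > BS02"
    using nc f1 f2 unfolding feasible_def by auto
  have lp: "lam > 0" using assms(5) by simp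
  define L where "L = lam powr (1 / alpha - 1)"
  have L1: "L \<ge> 1" unfolding L_def using assms(1,2,5)
    by (simp add: ge_one_powr_ge_zero)
  define K where "K = Nf * L"
  have Kp: "K > 0" unfolding K_def using L1 assms(4) by simp
  have sh1: "K * b1M < Nm * b1S"
    using share_bound[OF Kp assms(3), of B1 BS01 b1S b1M] assms(11) f1
    unfolding BS_NE_def K_def L_def feasible_def by (simp add: mult_ac)
  have sh2: "K * b2M < Nm * b2S"
    using share_bound[OF Kp assms(3), of B2 BS02 b2S b2M] assms(12) f2
    unfolding BS_NE_def K_def L_def feasible_def by (simp add: mult_ac)
  have m1: "b1M \<ge> 0" and m2: "b2M \<ge> 0" using f1 f2 unfolding feasible_def by auto
  define M where "M = b1M + b2M"
  define S where "S = b1S + b2S"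
  have Sp: "S > 0" unfolding S_def using s1 s2 assms(9,10) by simp
  have KS: "K * M < Nm * S" unfolding M_def S_def using sh1 sh2 by (simp add: algebra_simps)
  have "M \<le> L * M" using mult_right_mono[OF L1, of M] m1 m2 unfolding M_def by simp
  hence "Nf * M \<le> K * M" unfolding K_def using assms(4)
    by (metis mult.assoc mult_le_cancel_left_pos)
  moreover have "Nm * S \<le> Nm * lam * S" using assms(3,5) Sp by simp
  ultimately have reg: "Nm * lam * S > Nf * M" using KS by simp
  show False
  proof (cases "M = 0")
    case True
    hence z: "b1M = 0" "b2M = 0" using m1 m2 unfolding M_def by auto
    show False
      using dev_zero[OF assms(6) lp assms(3,4,1), where B=B1 and BSz=BS01 and s=b1S and s'=b2S]
        ne1 f1 s1 assms(9) s2 assms(10) z by simp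
  next
    case False
    hence Mp: "M > 0" using m1 m2 unfolding M_def by simp
    define a where "a = Nm powr alpha * R0 powr (1 - alpha)"
    define c where "c = Nf powr alpha * (lam * R0) powr (1 - alpha)"
    have i1: "a * (M powr (-alpha) - alpha*b1M*M powr(-alpha-1)) \<le> c * (S powr (-alpha) - alpha*b1S*S powr(-alpha-1))"
      using dev_interior[OF assms(6) lp assms(3,4), where B=B1 and BSz=BS01 and m=b1M and s=b1S and m'=b2M and s'=b2S and alpha=alpha]
        ne1 f1 s1 assms(9) s2 assms(10) Mp reg unfolding M_def S_def a_def c_def by simp
    have i2: "a * (M powr (-alpha) - alpha*b2M*M powr(-alpha-1)) \<le> c * (S powr (-alpha) - alpha*b2S*S powr(-alpha-1))"
      using dev_interior[OF assms(6) lp assms(3,4), where B=B2 and BSz=BS02 and m=b2M and s=b2S and m'=b1M and s'=b1S and alpha=alpha]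
        ne2 f2 s2 assms(10) s1 assms(9) Mp reg unfolding M_def S_def a_def c_def by (simp add: add.commute)
    have "a * (2 * M powr (-alpha) - alpha * (M * M powr(-alpha-1))) \<le> c * (2 * S powr (-alpha) - alpha * (S * S powr(-alpha-1)))"
      using add_mono[OF i1 i2] unfolding M_def S_def by (simp add: algebra_simps)
    moreover have "M * M powr(-alpha-1) = M powr (-alpha)" using Mp
      by (simp add: powr_add[symmetric] powr_mult_base)
    moreover have "S * S powr(-alpha-1) = S powr (-alpha)" using Sp
      by (simp add: powr_mult_base)
    ultimately have "(2 - alpha) * (a * M powr (-alpha)) \<le> (2 - alpha) * (c * S powr (-alpha))"
      by (simp add: algebra_simps)
    hence key: "a * M powr (-alpha) \<le> c * S powr (-alpha)" using assms(2) by simp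
    have eqa: "a * M powr (-alpha) = (Nm / M) powr alpha * R0 powr (1 - alpha)"
      unfolding a_def by (simp add: powr_divide powr_minus_divide)
    have "lam powr (1 - alpha) = L powr alpha"
      proof -
      have "(1 / alpha - 1) * alpha = 1 - alpha" using assms(1) by (simp add: field_simps)
      thus ?thesis unfolding L_def by (simp add: powr_powr)
    qed
    hence eqc: "c * S powr (-alpha) = (K / S) powr alpha * R0 powr (1 - alpha)"
      unfolding c_def K_def by (simp add: powr_divide powr_minus_divide powr_mult)
    have "(Nm / M) powr alpha \<le> (K / S) powr alpha"
      using key eqa eqc assms(6) by simp
    hence "Nm / M \<le> K / S"
      using powr_less_mono2[OF assms(1), of "K / S" "Nm / M"] Kp Sp by force
    hence "Nm * S \<le> K * M" using Mp Sp by (simp add: field_simps)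
    thus False using KS by simp
  qed
qed

end
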